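(* Let $\ell\ge 1$, $N=2^\ell$, and let $D$ be an $N\times N$ binary dyadic matrix. If $S=\mathrm{supp}(\sigma(D))\subseteq \mathbb{F}_2^\ell$ is a linear subspace of $\mathbb{F}_2^\ell$ or a coset ${\mathbf a}+U$ of a linear subspace $U$ of $\mathbb{F}_2^\ell$, then $\mathrm{rank}_{\mathbb{F}_2}(D)=N/|S|$.
   Context: Rows and columns of $N\times N$ binary matrices ($N=2^\ell$) are indexed by $\mathbb{F}_2^\ell$ via the bijection ${\mathbf x}=(x_1,\dots,x_\ell)\leftrightarrow 1+\sum_{i=1}^\ell x_i2^{i-1}\in\{1,\dots,N\}$. A matrix $D\in\mathbb{F}_2^{N\times N}$ is dyadic if $D_{{\mathbf x},{\mathbf y}}=D_{{\bf 0},{\mathbf x}+{\mathbf y}}$ for all ${\mathbf x},{\mathbf y}\in\mathbb{F}_2^\ell$. The signature $\sigma(D)\in\mathbb{F}_2^N$ is the row of $D$ indexed by ${\bf 0}$; its support $\mathrm{supp}(\sigma(D))$ (set of positions with nonzero entries) is viewed as a subset of $\mathbb{F}_2^\ell$ via the bijection. *)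

theory Defs
  imports "HOL-Library.Z2" "Jordan_Normal_Form.DL_Rank"
begin

text \<open>Encoding: a vector x = (x_1,...,x_l) in F_2^l is represented by the natural
number k = sum_i x_i 2^(i-1) < 2^l (the paper's index minus 1, since matrices here are
0-indexed).\<close>

definition f2_add :: "nat \<Rightarrow> nat \<Rightarrow> nat" where
  "f2_add x y = Bit_Operations.xor x y"

definition f2_smult :: "bit \<Rightarrow> nat \<Rightarrow> nat" where
  "f2_smult c x = (if c = 0 then 0 else x)"

definition f2_subspace :: "nat \<Rightarrow> nat set \<Rightarrow> bool" where
  "f2_subspace l U \<longleftrightarrow> U \<subseteq> {..<2^l} \<and> 0 \<in> U \<and>
     (\<forall>x\<in>U. \<forall>y\<in>U. f2_add x y \<in> U) \<and> (\<forall>c. \<forall>x\<in>U. f2_smult c x \<in> U)"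

definition f2_coset :: "nat \<Rightarrow> nat set \<Rightarrow> bool" where
  "f2_coset l S \<longleftrightarrow> (\<exists>a U. a < 2^l \<and> f2_subspace l U \<and> S = f2_add a ` U)"

definition dyadic :: "nat \<Rightarrow> bit mat \<Rightarrow> bool" where
  "dyadic l D \<longleftrightarrow> D \<in> carrier_mat (2^l) (2^l) \<and>
     (\<forall>x<2^l. \<forall>y<2^l. D $$ (x, y) = D $$ (0, f2_add x y))"

definition signature :: "bit mat \<Rightarrow> bit vec" where
  "signature D = row D 0"

definition supp :: "bit vec \<Rightarrow> nat set" where
  "supp v = {i. i < dim_vec v \<and> v $ i \<noteq> 0}"

definition rank_F2 :: "bit mat \<Rightarrow> nat" where
  "rank_F2 D = vec_space.rank (dim_row D) D"

end

theory Submission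
  imports Defs
begin

lemma xor_lt: "(x::nat) < 2^l \<Longrightarrow> y < 2^l \<Longrightarrow> xor x y < 2^l"
  by (metis XOR_upper linorder_not_le of_nat_less_0_iff
    of_nat_less_numeral_power_cancel_iff of_nat_xor_eq)

lemma xx: "xor a (xor a (z::nat)) = z"
  by (simp add: xor.assoc[symmetric])

lemma affine_S:
  assumes "f2_subspace l S \<or> f2_coset l S"
  shows "S \<subseteq> {..<2^l}" "S \<noteq> {}"
    "\<And>s1 s2 s3. s1 \<in> S \<Longrightarrow> s2 \<in> S \<Longrightarrow> s3 \<in> S \<Longrightarrow> xor (xor s1 s2) s3 \<in> S"
proof -
  have "S \<subseteq> {..<2^l} \<and> S \<noteq> {} \<and> (\<forall>s1\<in>S. \<forall>s2\<in>S. \<forall>s3\<in>S. xor (xor s1 s2) s3 \<in> S)"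
    using assms
  proof
    assume "f2_subspace l S"
    then show ?thesis unfolding f2_subspace_def f2_add_def by blast
  next
    assume "f2_coset l S"
    then obtain a U where a: "a < 2^l" and U: "f2_subspace l U" and S: "S = f2_add a ` U"
      unfolding f2_coset_def by blast
    have "S \<subseteq> {..<2^l}" using U a unfolding S f2_subspace_def f2_add_def
      using xor_lt by auto
    moreover have "S \<noteq> {}" using U unfolding S f2_subspace_def by auto
    moreover have "\<forall>s1\<in>S. \<forall>s2\<in>S. \<forall>s3\<in>S. xor (xor s1 s2) s3 \<in> S"
    proof (intro ballI)
      fix s1 s2 s3 assume "s1 \<in> S" "s2 \<in> S" "s3 \<in> S"
      then obtain u v w where "u \<in> U" "v \<in> U" "w \<in> U" "s1 = xor a u" "s2 = xor a v" "s3 = xor a w"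
        unfolding S f2_add_def by auto
      moreover have "xor (xor u v) w \<in> U" using U \<open>u \<in> U\<close> \<open>v \<in> U\<close> \<open>w \<in> U\<close>
        unfolding f2_subspace_def f2_add_def by blast
      ultimately show "xor (xor s1 s2) s3 \<in> S" unfolding S f2_add_def
        by (simp add: xor.assoc xor.left_commute xx)
    qed
    ultimately show ?thesis by blast
  qed
  then show "S \<subseteq> {..<2^l}" "S \<noteq> {}"
    "\<And>s1 s2 s3. s1 \<in> S \<Longrightarrow> s2 \<in> S \<Longrightarrow> s3 \<in> S \<Longrightarrow> xor (xor s1 s2) s3 \<in> S"
    by blast+
qed

theorem mainTheorem1:
  fixes l :: nat and D :: "bit mat"
  assumes "l \<ge> 1"
    and "dyadic l D"
    and "f2_subspace l (supp (signature D)) \<or> f2_coset l (supp (signature D))"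
  shows "rank_F2 D = 2^l div card (supp (signature D))"
proof -
  define n :: nat where "n = 2^l"
  define S where "S = supp (signature D)"
  have Dc: "D \<in> carrier_mat n n" and Dd: "\<And>x y. x < n \<Longrightarrow> y < n \<Longrightarrow> D $$ (x, y) = D $$ (0, xor x y)"
    using assms(2) unfolding dyadic_def n_def f2_add_def by auto
  have Sd: "S = {i. i < n \<and> D $$ (0, i) \<noteq> 0}"
    using Dc unfolding S_def supp_def signature_def n_def by auto
  have Sn: "S \<subseteq> {..<n}" and Sne: "S \<noteq> {}"
    and Sa: "\<And>s1 s2 s3. s1 \<in> S \<Longrightarrow> s2 \<in> S \<Longrightarrow> s3 \<in> S \<Longrightarrow> xor (xor s1 s2) s3 \<in> S"
    using affine_S[OF assms(3)] unfolding S_def[symmetric] n_def by blast+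
  have xl: "\<And>x y. x < n \<Longrightarrow> y < n \<Longrightarrow> xor x y < n" unfolding n_def using xor_lt by blast
  define T where "T y = {x. x < n \<and> xor x y \<in> S}" for y
  define ind where "ind X = vec n (\<lambda>x. if x \<in> X then 1 else (0::bit))" for X
  have colD: "col D y = ind (T y)" if "y < n" for y
  proof (rule eq_vecI)
    show "dim_vec (col D y) = dim_vec (ind (T y))" using Dc unfolding ind_def by simp
    fix i assume "i < dim_vec (ind (T y))"
    then have i: "i < n" unfolding ind_def by simp
    show "col D y $ i = ind (T y) $ i"
      using Dc i that Dd[OF i that] xl[OF i that] unfolding ind_def T_def Sd
      by (auto simp: bit_not_zero_iff)
  qed
  have cols: "set (cols D) = ind ` T ` {..<n}"
  proof -
    have "set (cols D) = col D ` {..<n}" using Dc unfolding cols_def by auto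
    also have "\<dots> = ind ` T ` {..<n}" using colD by (auto simp: image_image)
    finally show ?thesis .
  qed
  have Tsub: "T y \<subseteq> {..<n}" for y unfolding T_def by auto
  have Tne: "\<exists>i. i \<in> T y" if "y < n" for y
  proof -
    obtain s where s: "s \<in> S" using Sne by blast
    then have "xor s y \<in> T y" using Sn xl[OF _ that] unfolding T_def by (auto simp: xor.assoc)
    then show ?thesis by blast
  qed
  have Tco: "T y = T y'" if "i \<in> T y" "i \<in> T y'" for i y y'
  proof -
    have 1: "xor x y' \<in> S" if "xor i y \<in> S" "xor i y' \<in> S" "xor x y \<in> S" for x y y'
    proof -
      have "xor (xor (xor x y) (xor i y)) (xor i y') \<in> S" using Sa that by blast
      moreover have "xor (xor (xor x y) (xor i y)) (xor i y') = xor x y'"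
        by (simp add: xor.assoc xor.left_commute xx)
      ultimately show ?thesis by simp
    qed
    show ?thesis using that 1 unfolding T_def by blast
  qed
  have indinj: "X = Y" if "X \<subseteq> {..<n}" "Y \<subseteq> {..<n}" "ind X = ind Y" for X Y
  proof -
    have "x \<in> X \<longleftrightarrow> x \<in> Y" if "x < n" for x
    proof -
      have "ind X $ x = ind Y $ x" using \<open>ind X = ind Y\<close> by simp
      then have "(if x \<in> X then 1 else (0::bit)) = (if x \<in> Y then 1 else 0)"
        using that unfolding ind_def by simp
      then show ?thesis by (auto split: if_splits)
    qed
    then show ?thesis using that(1,2) by blast
  qed
  interpret V: vec_space "TYPE(bit)" n .
  have carr: "set (cols D) \<subseteq> carrier_vec n" using Dc cols_dim by blast
  have li: "V.lin_indpt (set (cols D))"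
  proof
    assume "V.lin_dep (set (cols D))"
    then obtain A a v where A: "finite A" "A \<subseteq> set (cols D)" and lc: "V.lincomb a A = 0\<^sub>v n"
      and v: "v \<in> A" "a v \<noteq> 0"
      unfolding V.lin_dep_def by auto
    obtain y where y: "y < n" "v = ind (T y)" using v A cols by auto
    obtain i where i: "i \<in> T y" using Tne[OF y(1)] by blast
    have iN: "i < n" using i Tsub by auto
    have AC: "A \<subseteq> carrier_vec n" using A carr by blast
    have zero: "(\<Sum>w\<in>A - {v}. a w * w $ i) = 0"
    proof (rule sum.neutral, rule ballI)
      fix w assume w: "w \<in> A - {v}"
      then obtain y' where y': "y' < n" "w = ind (T y')" using A cols by auto
      have "i \<notin> T y'"
      proof
        assume "i \<in> T y'"
        then have "T y = T y'" using Tco i by blast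
        then show False using w y y' by auto
      qed
      then show "a w * w $ i = 0" using y' iN unfolding ind_def by simp
    qed
    have "V.lincomb a A $ i = (\<Sum>w\<in>A. a w * w $ i)"
      using V.lincomb_index[OF iN AC] .
    also have "\<dots> = a v * v $ i + (\<Sum>w\<in>A - {v}. a w * w $ i)"
      using sum.remove[OF A(1) v(1)] .
    also have "\<dots> = a v" using zero y i iN unfolding ind_def by simp
    finally have "a v = 0" using lc iN by simp
    then show False using v by simp
  qed
  have max: "maximal (set (cols D)) (\<lambda>T. T \<subseteq> set (cols D) \<and> V.lin_indpt T)"
    using li unfolding maximal_def by auto
  have r: "rank_F2 D = card (set (cols D))"
    unfolding rank_F2_def using Dc V.rank_card_indpt[OF Dc max] by simp
  have c1: "card (set (cols D)) = card (T ` {..<n})"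
    unfolding cols by (rule card_image, rule inj_onI, rule indinj, use Tsub in auto)
  have cardT: "card (T y) = card S" if "y < n" for y
  proof -
    have "T y = (\<lambda>s. xor s y) ` S"
    proof
      show "T y \<subseteq> (\<lambda>s. xor s y) ` S" unfolding T_def
        by (auto simp: image_iff) (metis xor.assoc xor_self_eq xor.right_neutral)
      show "(\<lambda>s. xor s y) ` S \<subseteq> T y" using Sn xl[OF _ that] unfolding T_def
        by (auto simp: xor.assoc)
    qed
    moreover have "inj_on (\<lambda>s. xor s y) S"
      by (rule inj_onI) (metis xor.assoc xor_self_eq xor.right_neutral)
    ultimately show ?thesis by (simp add: card_image)
  qed
  have un: "\<Union> (T ` {..<n}) = {..<n}"
  proof
    show "\<Union> (T ` {..<n}) \<subseteq> {..<n}" using Tsub by blast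
    show "{..<n} \<subseteq> \<Union> (T ` {..<n})"
    proof
      fix x assume x: "x \<in> {..<n}"
      obtain s where s: "s \<in> S" using Sne by blast
      have "xor x s < n" using xl x s Sn by auto
      moreover have "x \<in> T (xor x s)" using x s unfolding T_def by (simp add: xx)
      ultimately show "x \<in> \<Union> (T ` {..<n})" by blast
    qed
  qed
  have "card S * card (T ` {..<n}) = card (\<Union> (T ` {..<n}))"
  proof (rule card_partition)
    show "finite (T ` {..<n})" by simp
    show "finite (\<Union> (T ` {..<n}))" unfolding un by simp
    show "\<And>c. c \<in> T ` {..<n} \<Longrightarrow> card c = card S" using cardT by auto
    show "\<And>c1 c2. c1 \<in> T ` {..<n} \<Longrightarrow> c2 \<in> T ` {..<n} \<Longrightarrow> c1 \<noteq> c2 \<Longrightarrow> c1 \<inter> c2 = {}"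
      using Tco by blast
  qed
  then have eq: "card S * card (T ` {..<n}) = n" using un by simp
  have "card S > 0" using Sne Sn by (meson card_gt_0_iff finite_lessThan finite_subset)
  then have "n div card S = card (T ` {..<n})" using eq by (metis nonzero_mult_div_cancel_left less_not_refl)
  then show ?thesis using r c1 unfolding n_def S_def by simp
qed

end
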